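(* Let $Q:(-\infty,-1)\to(-\infty,0)$ be the inverse of the strictly increasing function $G\mapsto G-e^G$ on $(-\infty,0)$, and define $R:\mathbb{R}\to\mathbb{R}$ by $R(V)=-2(1-e^{Q(V)})^2$ for $V<-1$ and $R(V)=4(V+1)$ for $V\ge -1$. Fix $m<-1$. For $n\in\mathbb{R}$ let $V(t;n)$ denote the unique solution of $V''+3V'=R(V)$, $t>0$, $V(0)=m$, $V'(0)=n$ (prime denoting $d/dt$, $V_t=dV/dt$). Define $\beta^0=\{n\in\mathbb{R}: V_t(t;n)>0 \text{ and } V(t;n)\le -1 \text{ for all } t>0\}$. Then $\beta^0$ consists of exactly one point. *)

theory Defs
  imports "HOL-Analysis.Analysis"
begin

definition Qinv :: "real \<Rightarrow> real" where
  "Qinv v = (THE G. G < 0 \<and> G - exp G = v)"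

definition Rfun :: "real \<Rightarrow> real" where
  "Rfun v = (if v < -1 then - 2 * (1 - exp (Qinv v))^2 else 4 * (v + 1))"

definition is_solution :: "real \<Rightarrow> real \<Rightarrow> (real \<Rightarrow> real) \<Rightarrow> (real \<Rightarrow> real) \<Rightarrow> bool" where
  "is_solution m n V V' \<longleftrightarrow>
     V 0 = m \<and> V' 0 = n \<and>
     (\<forall>t\<ge>0. (V has_real_derivative V' t) (at t within {0..})) \<and>
     (\<forall>t\<ge>0. (V' has_real_derivative (Rfun (V t) - 3 * V' t)) (at t within {0..}))"

definition beta0 :: "real \<Rightarrow> real set" where
  "beta0 m = {n. \<exists>V V'. is_solution m n V V' \<and>
                    (\<forall>t>0. V' t > 0 \<and> V t \<le> -1)}"

end

theory Submission
  imports Defs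
begin



lemma incr_within:
  fixes f f' :: "real \<Rightarrow> real"
  assumes "a \<le> b"
    and d: "\<And>t. a \<le> t \<Longrightarrow> t \<le> b \<Longrightarrow> (f has_real_derivative f' t) (at t within {a..b})"
    and p: "\<And>t. a < t \<Longrightarrow> t < b \<Longrightarrow> f' t \<ge> 0"
  shows "f a \<le> f b"
proof (cases "a = b")
  case False
  hence ab: "a < b" using assms(1) by simp
  have "\<exists>x\<in>{a<..<b}. f b - f a = (\<lambda>h. f' x * h) (b - a)"
    by (rule mvt_simple[OF ab]) (use d in \<open>auto simp: has_field_derivative_def\<close>)
  then obtain x where "x \<in> {a<..<b}" "f b - f a = f' x * (b - a)" by auto
  moreover have "f' x \<ge> 0" using p \<open>x \<in> {a<..<b}\<close> by auto
  moreover have "f' x * (b - a) \<ge> 0" using \<open>f' x \<ge> 0\<close> assms(1) by simp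
  ultimately show ?thesis by linarith
qed simp

lemma incr0:
  fixes f f' :: "real \<Rightarrow> real"
  assumes "0 \<le> a" "a \<le> b"
    and d: "\<And>t. a \<le> t \<Longrightarrow> t \<le> b \<Longrightarrow> (f has_real_derivative f' t) (at t within {0..})"
    and p: "\<And>t. a < t \<Longrightarrow> t < b \<Longrightarrow> f' t \<ge> 0"
  shows "f a \<le> f b"
proof (rule incr_within[OF assms(2) _ p])
  fix t assume "a \<le> t" "t \<le> b"
  then show "(f has_real_derivative f' t) (at t within {a..b})"
    using d[of t] assms(1) by (auto intro: has_field_derivative_subset)
qed auto

lemma decr0:
  fixes f f' :: "real \<Rightarrow> real"
  assumes "0 \<le> a" "a \<le> b"
    and d: "\<And>t. a \<le> t \<Longrightarrow> t \<le> b \<Longrightarrow> (f has_real_derivative f' t) (at t within {0..})"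
    and p: "\<And>t. a < t \<Longrightarrow> t < b \<Longrightarrow> f' t \<le> 0"
  shows "f b \<le> f a"
proof -
  have "(\<lambda>t. - f t) a \<le> (\<lambda>t. - f t) b"
    by (rule incr0[OF assms(1,2), of _ "\<lambda>t. - f' t"]) (use d p in \<open>auto intro: derivative_intros\<close>)
  then show ?thesis by simp
qed

definition phi :: "real \<Rightarrow> real" where "phi g = g - exp g"
definition psi :: "real \<Rightarrow> real" where "psi g = - 2 * (1 - exp g)^2"

lemma phi_deriv: "(phi has_real_derivative 1 - exp x) (at x)"
  unfolding phi_def[abs_def] by (auto intro!: derivative_eq_intros)

lemma phi_strict:
  assumes "a < b" "b \<le> 0" shows "phi a < phi b"
proof (rule DERIV_pos_imp_increasing_open[OF assms(1)])
  fix x assume "a < x" "x < b"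
  then show "\<exists>y. DERIV phi x :> y \<and> y > 0"
    using assms by (intro exI[of _ "1 - exp x"] conjI) (auto intro!: phi_deriv)
qed (auto simp: phi_def intro!: continuous_intros)

lemma phi_mono_le:
  assumes "a \<le> b" "b \<le> 0" shows "phi a \<le> phi b"
  using phi_strict assms by (cases "a = b") (auto intro: less_imp_le)

lemma Q_ex: fixes v :: real assumes "v < -1" shows "\<exists>!G. G < 0 \<and> G - exp G = v"
proof -
  have "\<exists>x::real. v \<le> x \<and> x \<le> 0 \<and> phi x = v"
    by (rule IVT') (use assms in \<open>auto simp: phi_def intro!: continuous_intros\<close>)
  then obtain x where x: "v \<le> x" "x \<le> 0" "phi x = v" by auto
  have "x \<noteq> 0" using x assms by (auto simp: phi_def)
  with x have ex: "x < 0 \<and> x - exp x = v" by (auto simp: phi_def)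
  show ?thesis
  proof (rule ex1I[of _ x])
    fix y assume "y < 0 \<and> y - exp y = v"
    then show "y = x" using phi_strict[of x y] phi_strict[of y x] ex
      by (auto simp: phi_def) (meson linorder_neqE_linordered_idom order_less_imp_le)
  qed (rule ex)
qed

lemma Qinv: assumes "v < -1" shows "Qinv v < 0" "phi (Qinv v) = v"
  using theI'[OF Q_ex[OF assms]] by (auto simp: Qinv_def phi_def)

lemma Rfun_lt: "v < -1 \<Longrightarrow> Rfun v = psi (Qinv v)"
  by (simp add: Rfun_def psi_def)

lemma Qinv_mono: assumes "v1 \<le> v2" "v2 < -1" shows "Qinv v1 \<le> Qinv v2"
proof (rule ccontr)
  assume "\<not> ?thesis"
  hence "phi (Qinv v2) < phi (Qinv v1)" using phi_strict Qinv assms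
    by (metis le_less_trans linorder_not_le order_less_imp_le)
  thus False using Qinv assms by simp
qed

lemma slope_upper:
  assumes "g1 \<le> g2" "g2 \<le> 0"
  shows "psi g2 - psi g1 \<le> 4 * (phi g2 - phi g1)"
proof -
  let ?h = "\<lambda>g. psi g - 4 * phi g"
  have "?h g2 \<le> ?h g1"
  proof (rule DERIV_nonpos_imp_decreasing_open[OF assms(1)])
    fix x assume "g1 < x" "x < g2"
    show "\<exists>y. DERIV ?h x :> y \<and> y \<le> 0"
      apply (rule exI[of _ "4 * (1 - exp x) * exp x - 4 * (1 - exp x)"])
      apply (intro conjI)
       apply (unfold psi_def phi_def)
       apply (rule derivative_eq_intros refl | simp)+
      using zero_le_power2[of "exp x - 1"] by (simp add: algebra_simps power2_eq_square)
  next
    show "continuous_on {g1..g2} ?h" by (auto simp: psi_def phi_def intro!: continuous_intros)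
  qed
  thus ?thesis by simp
qed

lemma slope_lower:
  assumes "g0 \<le> g1" "g1 \<le> g2" "g2 \<le> 0"
  shows "4 * exp g0 * (phi g2 - phi g1) \<le> psi g2 - psi g1"
proof -
  let ?c = "4 * exp g0"
  let ?h = "\<lambda>g. psi g - ?c * phi g"
  have "?h g1 \<le> ?h g2"
  proof (rule DERIV_nonneg_imp_increasing_open[OF assms(2)])
    fix x assume "g1 < x" "x < g2"
    have "exp g0 \<le> exp x" using \<open>g1 < x\<close> assms by simp
    moreover have "exp x \<le> 1" using \<open>x < g2\<close> assms by simp
    ultimately have "0 \<le> (1 - exp x) * (4 * exp x - ?c)"
      by (intro mult_nonneg_nonneg) auto
    then show "\<exists>y. DERIV ?h x :> y \<and> y \<ge> 0"
      apply (intro exI[of _ "4 * (1 - exp x) * exp x - ?c * (1 - exp x)"] conjI)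
       apply (unfold psi_def phi_def)
       apply (rule derivative_eq_intros refl | simp)+
      by (simp add: algebra_simps)
  next
    show "continuous_on {g1..g2} ?h" by (auto simp: psi_def phi_def intro!: continuous_intros)
  qed
  thus ?thesis by (simp add: algebra_simps)
qed




definition Gof :: "real \<Rightarrow> real" where "Gof v = (if v < -1 then Qinv v else 0)"

lemma Gof: assumes "v \<le> -1" shows "Gof v \<le> 0" "phi (Gof v) = v" "Rfun v = psi (Gof v)"
  using assms Qinv[of v] by (auto simp: Gof_def Rfun_lt phi_def psi_def Rfun_def)

lemma Gof_mono: assumes "v1 \<le> v2" "v2 \<le> -1" shows "Gof v1 \<le> Gof v2"
  using assms Qinv_mono[of v1 v2] Qinv[of v1] by (auto simp: Gof_def)

lemma Rfun_ge: "v \<ge> -1 \<Longrightarrow> Rfun v = 4 * (v + 1)"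
  by (auto simp: Rfun_def)

definition kap :: "real \<Rightarrow> real" where "kap m = 4 * exp (Qinv m)"

lemma kap: assumes "m < -1" shows "0 < kap m" "kap m < 4"
  using Qinv[OF assms] by (auto simp: kap_def)

lemma slope_A:
  assumes "m < -1" "m \<le> v1" "v1 \<le> v2" "v2 \<le> -1"
  shows "kap m * (v2 - v1) \<le> Rfun v2 - Rfun v1 \<and> Rfun v2 - Rfun v1 \<le> 4 * (v2 - v1)"
proof -
  have g0: "Gof m = Qinv m" using assms by (simp add: Gof_def)
  have "Gof m \<le> Gof v1" "Gof v1 \<le> Gof v2" "Gof v2 \<le> 0"
    using assms by (auto intro: Gof_mono Gof)
  then show ?thesis
    using slope_lower[of "Gof m" "Gof v1" "Gof v2"] slope_upper[of "Gof v1" "Gof v2"]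
      Gof[of v1] Gof[of v2] assms g0 by (auto simp: kap_def)
qed

lemma slope_B:
  assumes "m < -1" "-1 \<le> v1" "v1 \<le> v2"
  shows "kap m * (v2 - v1) \<le> Rfun v2 - Rfun v1 \<and> Rfun v2 - Rfun v1 \<le> 4 * (v2 - v1)"
proof -
  have "kap m * (v2 - v1) \<le> 4 * (v2 - v1)"
    using assms kap[OF assms(1)] by (intro mult_right_mono) auto
  then show ?thesis using assms by (auto simp: Rfun_ge algebra_simps)
qed

lemma slope:
  assumes "m < -1" "m \<le> v1" "v1 \<le> v2"
  shows "kap m * (v2 - v1) \<le> Rfun v2 - Rfun v1 \<and> Rfun v2 - Rfun v1 \<le> 4 * (v2 - v1)"
proof (cases "v2 \<le> -1")
  case True then show ?thesis using slope_A assms by blast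
next
  case False
  show ?thesis
  proof (cases "v1 \<ge> -1")
    case True then show ?thesis using slope_B assms by blast
  next
    case False2: False
    have a: "kap m * (-1 - v1) \<le> Rfun (-1) - Rfun v1 \<and> Rfun (-1) - Rfun v1 \<le> 4 * (-1 - v1)"
      using slope_A[of m v1 "-1"] assms False2 by auto
    have b: "kap m * (v2 - (-1)) \<le> Rfun v2 - Rfun (-1) \<and> Rfun v2 - Rfun (-1) \<le> 4 * (v2 - (-1))"
      using slope_B[of m "-1" v2] assms False by auto
    from a b show ?thesis by (auto simp: algebra_simps)
  qed
qed

definition NN :: "real \<Rightarrow> real \<Rightarrow> real" where
  "NN m v = Rfun (max v m) - 4 * (max v m + 1)"

definition LL :: "real \<Rightarrow> real" where "LL m = 4 - kap m"

definition Rt :: "real \<Rightarrow> real \<Rightarrow> real" where "Rt m v = 4 * (v + 1) + NN m v"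

lemma NN_slope:
  assumes "m < -1" "v1 \<le> v2"
  shows "0 \<le> NN m v1 - NN m v2 \<and> NN m v1 - NN m v2 \<le> LL m * (v2 - v1)"
proof -
  let ?w1 = "max v1 m" and ?w2 = "max v2 m"
  have w: "m \<le> ?w1" "?w1 \<le> ?w2" "?w2 - ?w1 \<le> v2 - v1" using assms by auto
  have s: "kap m * (?w2 - ?w1) \<le> Rfun ?w2 - Rfun ?w1 \<and> Rfun ?w2 - Rfun ?w1 \<le> 4 * (?w2 - ?w1)"
    by (rule slope[OF assms(1) w(1) w(2)])
  have "LL m \<ge> 0" using kap[OF assms(1)] by (simp add: LL_def)
  hence "LL m * (?w2 - ?w1) \<le> LL m * (v2 - v1)" using w by (intro mult_left_mono) auto
  with s show ?thesis by (auto simp: NN_def LL_def algebra_simps)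
qed

lemma NN_bounds:
  assumes "m < -1" shows "0 \<le> NN m v" "NN m v \<le> NN m m"
proof -
  have "NN m (max v 0) = 0" using assms by (simp add: NN_def Rfun_ge)
  then show "0 \<le> NN m v" using NN_slope[OF assms, of v "max v 0"] by auto
  have "NN m (min v m) = NN m m" by (simp add: NN_def)
  then show "NN m v \<le> NN m m" using NN_slope[OF assms, of "min v m" v] by auto
qed

lemma NN_lip: assumes "m < -1" shows "\<bar>NN m v1 - NN m v2\<bar> \<le> LL m * \<bar>v1 - v2\<bar>"
  using NN_slope[OF assms, of v1 v2] NN_slope[OF assms, of v2 v1]
  by (cases "v1 \<le> v2") (auto simp: abs_if algebra_simps)

lemma LL: assumes "m < -1" shows "0 \<le> LL m" "LL m < 4"
  using kap[OF assms] by (auto simp: LL_def)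

lemma NN_cont: assumes "m < -1" shows "continuous_on UNIV (NN m)"
proof (rule lipschitz_on_continuous_on)
  show "(LL m)-lipschitz_on UNIV (NN m)"
    using NN_lip[OF assms] LL[OF assms] by (auto simp: lipschitz_on_def dist_real_def)
qed

lemma Rt_slope: assumes "m < -1" "v1 \<le> v2" shows "kap m * (v2 - v1) \<le> Rt m v2 - Rt m v1"
  using NN_slope[OF assms] by (auto simp: Rt_def LL_def algebra_simps)

lemma Rt_mono: assumes "m < -1" "v1 \<le> v2" shows "Rt m v1 \<le> Rt m v2"
  using Rt_slope[OF assms] kap[OF assms(1)] assms(2)
  by (smt (verit, best) mult_nonneg_nonneg)

lemma Rt_neg: assumes "m < -1" "v < -1" shows "Rt m v < 0"
proof -
  have "Rt m (-1) = 0" using assms by (simp add: Rt_def NN_def Rfun_ge)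
  moreover have "kap m * (-1 - v) > 0" using kap[OF assms(1)] assms by simp
  ultimately show ?thesis using Rt_slope[OF assms(1), of v "-1"] assms by simp
qed

lemma Rt_eq: assumes "m \<le> v" shows "Rt m v = Rfun v"
  using assms by (simp add: Rt_def NN_def)




definition I1 :: "(real \<Rightarrow> real) \<Rightarrow> real \<Rightarrow> real" where
  "I1 f = (\<lambda>t. integral {0..t} (\<lambda>s. exp (-s) * f s))"
definition I4 :: "(real \<Rightarrow> real) \<Rightarrow> real \<Rightarrow> real" where
  "I4 f = (\<lambda>t. integral {0..t} (\<lambda>s. exp (4 * s) * f s))"
definition KK :: "(real \<Rightarrow> real) \<Rightarrow> real" where
  "KK f = lim (\<lambda>k::nat. I1 f (real k))"

lemma int_deriv:
  assumes "continuous_on {0..} g" "0 \<le> t"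
  shows "((\<lambda>t. integral {0..t} g) has_real_derivative g t) (at t within {0..})"
proof -
  have "((\<lambda>x. integral {0..x} g) has_real_derivative g t) (at t within {0..t+1})"
    by (rule integral_has_real_derivative) (use assms in \<open>auto intro: continuous_on_subset\<close>)
  moreover have "at t within {0..t+1} = at t within {0..}"
    by (rule at_within_nhd[where S="{t-1<..<t+1}"]) auto
  ultimately show ?thesis by simp
qed

lemma dI1: assumes "continuous_on {0..} f" "0 \<le> t"
  shows "(I1 f has_real_derivative exp (-t) * f t) (at t within {0..})"
  unfolding I1_def by (rule int_deriv) (use assms in \<open>auto intro!: continuous_intros\<close>)

lemma dI4: assumes "continuous_on {0..} f" "0 \<le> t"
  shows "(I4 f has_real_derivative exp (4 * t) * f t) (at t within {0..})"
  unfolding I4_def by (rule int_deriv) (use assms in \<open>auto intro!: continuous_intros\<close>)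

lemma dI1': "continuous_on {0..} f \<Longrightarrow> 0 \<le> t \<Longrightarrow> D = exp (-t) * f t \<Longrightarrow>
   (I1 f has_real_derivative D) (at t within {0..})" using dI1 by simp
lemma dI4': "continuous_on {0..} f \<Longrightarrow> 0 \<le> t \<Longrightarrow> D = exp (4 * t) * f t \<Longrightarrow>
   (I4 f has_real_derivative D) (at t within {0..})" using dI4 by simp

lemma I1_0[simp]: "I1 f 0 = 0" and I4_0[simp]: "I4 f 0 = 0"
  by (auto simp: I1_def I4_def)

lemma I1_diff: assumes "continuous_on {0..} f" "continuous_on {0..} g" "0 \<le> t"
  shows "I1 (\<lambda>s. f s - g s) t = I1 f t - I1 g t"
proof -
  have "(\<lambda>s. exp (-s) * f s) integrable_on {0..t}" "(\<lambda>s. exp (-s) * g s) integrable_on {0..t}"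
    using assms by (auto intro!: integrable_continuous_interval continuous_intros intro: continuous_on_subset)
  then show ?thesis unfolding I1_def by (simp add: right_diff_distrib integral_diff)
qed

lemma I4_diff: assumes "continuous_on {0..} f" "continuous_on {0..} g" "0 \<le> t"
  shows "I4 (\<lambda>s. f s - g s) t = I4 f t - I4 g t"
proof -
  have "(\<lambda>s. exp (4 * s) * f s) integrable_on {0..t}" "(\<lambda>s. exp (4 * s) * g s) integrable_on {0..t}"
    using assms by (auto intro!: integrable_continuous_interval continuous_intros intro: continuous_on_subset)
  then show ?thesis unfolding I4_def by (simp add: right_diff_distrib integral_diff)
qed

context
  fixes f :: "real \<Rightarrow> real" and M :: real
  assumes cont: "continuous_on {0..} f" and bnd: "\<And>s. 0 \<le> s \<Longrightarrow> \<bar>f s\<bar> \<le> M"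
begin

lemma M_nonneg: "0 \<le> M" using bnd[of 0] by simp

lemma I1_incr_bound: assumes "0 \<le> t1" "t1 \<le> t2"
  shows "\<bar>I1 f t2 - I1 f t1\<bar> \<le> M * (exp (-t1) - exp (-t2))"
proof -
  have a: "(\<lambda>t. I1 f t + M * exp (-t)) t2 \<le> (\<lambda>t. I1 f t + M * exp (-t)) t1"
  proof (rule decr0[OF assms, of _ "\<lambda>t. exp (-t) * f t - M * exp (-t)"])
    fix t assume "t1 \<le> t" "t \<le> t2"
    then show "((\<lambda>t. I1 f t + M * exp (-t)) has_real_derivative exp (-t) * f t - M * exp (-t)) (at t within {0..})"
      apply (intro derivative_eq_intros dI1'[OF cont])
      using assms by auto
  next
    fix t assume "t1 < t" "t < t2"
    have "exp (-t) * f t \<le> exp (-t) * M" using bnd[of t] assms \<open>t1 < t\<close> by (intro mult_left_mono) auto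
    then show "exp (-t) * f t - M * exp (-t) \<le> 0" by (simp add: mult.commute)
  qed
  have b: "(\<lambda>t. I1 f t - M * exp (-t)) t1 \<le> (\<lambda>t. I1 f t - M * exp (-t)) t2"
  proof (rule incr0[OF assms, of _ "\<lambda>t. exp (-t) * f t + M * exp (-t)"])
    fix t assume "t1 \<le> t" "t \<le> t2"
    then show "((\<lambda>t. I1 f t - M * exp (-t)) has_real_derivative exp (-t) * f t + M * exp (-t)) (at t within {0..})"
      apply (intro derivative_eq_intros dI1'[OF cont])
      using assms by auto
  next
    fix t assume "t1 < t" "t < t2"
    have "exp (-t) * (- M) \<le> exp (-t) * f t" using bnd[of t] assms \<open>t1 < t\<close> by (intro mult_left_mono) auto
    then show "0 \<le> exp (-t) * f t + M * exp (-t)" by (simp add: mult.commute)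
  qed
  from a b show ?thesis by (simp add: abs_le_iff algebra_simps)
qed

lemma I1_Cauchy: "Cauchy (\<lambda>k::nat. I1 f (real k))"
proof (rule metric_CauchyI)
  fix e :: real assume e: "0 < e"
  obtain N :: nat where N0: "M < real N * e"
    using ex_less_of_nat_mult[OF e, of M] by blast
  have N: "M < e * (real N + 1)" using N0 e by (simp add: algebra_simps)
  have eN: "exp (- real N) * (real N + 1) \<le> 1"
  proof -
    have "1 + real N \<le> exp (real N)" by (rule exp_ge_add_one_self)
    then show ?thesis by (simp add: exp_minus field_simps)
  qed
  have MN: "M * exp (- real N) < e"
  proof -
    have "M * exp (- real N) * (real N + 1) \<le> M" using eN M_nonneg
      by (metis mult.assoc mult_left_le)
    also have "\<dots> < e * (real N + 1)" by (rule N)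
    finally show ?thesis by simp
  qed
  show "\<exists>N. \<forall>m\<ge>N. \<forall>n\<ge>N. dist (I1 f (real m)) (I1 f (real n)) < e"
  proof (intro exI allI impI)
    fix m n :: nat assume mn: "N \<le> m" "N \<le> n"
    have key: "\<bar>I1 f (real b) - I1 f (real a)\<bar> < e" if "N \<le> a" "a \<le> b" for a b :: nat
    proof -
      have "\<bar>I1 f (real b) - I1 f (real a)\<bar> \<le> M * (exp (- real a) - exp (- real b))"
        using that by (intro I1_incr_bound) auto
      also have "\<dots> \<le> M * exp (- real a)" using M_nonneg by (intro mult_left_mono) auto
      also have "\<dots> \<le> M * exp (- real N)" using M_nonneg that by (intro mult_left_mono) auto
      finally show ?thesis using MN by linarith
    qed
    show "dist (I1 f (real m)) (I1 f (real n)) < e"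
    proof (cases "m \<le> n")
      case True then show ?thesis using key[of m n] mn by (simp add: dist_real_def)
    next
      case False
      then have "\<bar>I1 f (real m) - I1 f (real n)\<bar> < e" using key[of n m] mn by simp
      then show ?thesis by (simp add: dist_real_def)
    qed
  qed
qed

lemma I1_lim: "(\<lambda>k::nat. I1 f (real k)) \<longlonglongrightarrow> KK f"
proof -
  have "convergent (\<lambda>k. I1 f (real k))" using I1_Cauchy by (rule Cauchy_convergent)
  then show ?thesis by (simp add: KK_def convergent_LIMSEQ_iff)
qed

lemma tail_bound: assumes "0 \<le> t" shows "\<bar>KK f - I1 f t\<bar> \<le> M * exp (-t)"
proof (rule LIMSEQ_le_const2)
  show "(\<lambda>k. \<bar>I1 f (real k) - I1 f t\<bar>) \<longlonglongrightarrow> \<bar>KK f - I1 f t\<bar>"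
    by (intro tendsto_intros I1_lim)
  show "\<exists>N. \<forall>n\<ge>N. \<bar>I1 f (real n) - I1 f t\<bar> \<le> M * exp (- t)"
  proof (intro exI allI impI)
    fix n assume "nat \<lceil>t\<rceil> \<le> n"
    hence "t \<le> real n" by linarith
    hence "\<bar>I1 f (real n) - I1 f t\<bar> \<le> M * (exp (-t) - exp (- real n))"
      using assms by (intro I1_incr_bound) auto
    also have "\<dots> \<le> M * exp (-t)" using M_nonneg by (intro mult_left_mono) auto
    finally show "\<bar>I1 f (real n) - I1 f t\<bar> \<le> M * exp (- t)" .
  qed
qed

lemma I41_bound: assumes "0 \<le> t" shows "\<bar>I4 f t - I1 f t\<bar> \<le> M * exp (4 * t) / 4"
proof -
  have a: "(\<lambda>t. I4 f t - I1 f t - M * exp (4 * t) / 4) t \<le> (\<lambda>t. I4 f t - I1 f t - M * exp (4 * t) / 4) 0"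
  proof (rule decr0[OF order_refl assms, of _ "\<lambda>t. exp (4 * t) * f t - exp (-t) * f t - M * exp (4 * t)"])
    fix s assume "0 \<le> s" "s \<le> t"
    then show "((\<lambda>t. I4 f t - I1 f t - M * exp (4 * t) / 4) has_real_derivative exp (4 * s) * f s - exp (-s) * f s - M * exp (4 * s)) (at s within {0..})"
      apply (intro derivative_eq_intros dI1'[OF cont] dI4'[OF cont])
      by auto
  next
    fix s assume s: "0 < s" "s < t"
    have "exp (-s) \<le> exp (4 * s)" using s by simp
    hence "(exp (4 * s) - exp (-s)) * f s \<le> (exp (4 * s) - exp (-s)) * M" using bnd[of s] s
      by (intro mult_left_mono) auto
    also have "\<dots> \<le> exp (4 * s) * M" using M_nonneg by (simp add: algebra_simps)
    finally show "exp (4 * s) * f s - exp (-s) * f s - M * exp (4 * s) \<le> 0" by (simp add: algebra_simps)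
  qed
  have b: "(\<lambda>t. I4 f t - I1 f t + M * exp (4 * t) / 4) 0 \<le> (\<lambda>t. I4 f t - I1 f t + M * exp (4 * t) / 4) t"
  proof (rule incr0[OF order_refl assms, of _ "\<lambda>t. exp (4 * t) * f t - exp (-t) * f t + M * exp (4 * t)"])
    fix s assume "0 \<le> s" "s \<le> t"
    then show "((\<lambda>t. I4 f t - I1 f t + M * exp (4 * t) / 4) has_real_derivative exp (4 * s) * f s - exp (-s) * f s + M * exp (4 * s)) (at s within {0..})"
      apply (intro derivative_eq_intros dI1'[OF cont] dI4'[OF cont])
      by auto
  next
    fix s assume s: "0 < s" "s < t"
    have "exp (-s) \<le> exp (4 * s)" using s by simp
    hence "(exp (4 * s) - exp (-s)) * (- M) \<le> (exp (4 * s) - exp (-s)) * f s" using bnd[of s] s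
      by (intro mult_left_mono) auto
    moreover have "- (exp (4 * s) * M) \<le> (exp (4 * s) - exp (-s)) * (- M)" using M_nonneg by (simp add: algebra_simps)
    ultimately show "0 \<le> exp (4 * s) * f s - exp (-s) * f s + M * exp (4 * s)" by (simp add: algebra_simps)
  qed
  have "I4 f t - I1 f t \<le> M * exp (4 * t) / 4" "-(I4 f t - I1 f t) \<le> M * exp (4 * t) / 4"
    using a b M_nonneg by simp_all
  then show ?thesis by (rule abs_leI)
qed

lemma main_bound: assumes "0 \<le> t"
  shows "\<bar>(exp (-4 * t) - exp t) * (KK f - I1 f t) + exp (-4 * t) * (I1 f t - I4 f t)\<bar> \<le> 5/4 * M"
proof -
  have e1: "\<bar>exp (-4 * t) - exp t\<bar> \<le> exp t" using assms by (simp add: abs_le_iff)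
  have "\<bar>(exp (-4 * t) - exp t) * (KK f - I1 f t)\<bar> \<le> exp t * (M * exp (-t))"
    unfolding abs_mult by (rule mult_mono[OF e1 tail_bound[OF assms]]) auto
  also have "\<dots> = M * (exp t * exp (-t))" by (simp add: algebra_simps)
  also have "\<dots> = M" by (simp add: exp_minus_inverse)
  finally have A: "\<bar>(exp (-4 * t) - exp t) * (KK f - I1 f t)\<bar> \<le> M" .
  have "\<bar>exp (-4 * t) * (I1 f t - I4 f t)\<bar> = exp (-4 * t) * \<bar>I4 f t - I1 f t\<bar>"
    by (simp add: abs_mult abs_minus_commute)
  also have "\<dots> \<le> exp (-4 * t) * (M * exp (4 * t) / 4)"
    using I41_bound[OF assms] by (intro mult_left_mono) auto
  also have "\<dots> = M / 4 * (exp (-4 * t) * exp (4 * t))" by (simp add: algebra_simps)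
  also have "\<dots> = M / 4" by (simp add: mult_exp_exp)
  finally have B: "\<bar>exp (-4 * t) * (I1 f t - I4 f t)\<bar> \<le> M / 4" .
  from A B show ?thesis by linarith
qed

lemma KK_ge: assumes "\<And>s. 0 \<le> s \<Longrightarrow> 0 \<le> f s" "0 \<le> t" shows "I1 f t \<le> KK f"
proof (rule LIMSEQ_le_const[OF I1_lim])
  show "\<exists>N. \<forall>n\<ge>N. I1 f t \<le> I1 f (real n)"
  proof (intro exI allI impI)
    fix n assume "nat \<lceil>t\<rceil> \<le> n"
    hence "t \<le> real n" by linarith
    show "I1 f t \<le> I1 f (real n)"
    proof (rule incr0[OF assms(2) \<open>t \<le> real n\<close>, of _ "\<lambda>t. exp (-t) * f t"])
      fix s assume "t \<le> s" "s \<le> real n"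
      then have "0 \<le> s" using assms(2) by linarith
      then show "(I1 f has_real_derivative exp (-s) * f s) (at s within {0..})"
        by (rule dI1[OF cont])
    next
      fix s assume "t < s" "s < real n"
      then have "0 \<le> s" using assms(2) by linarith
      then show "0 \<le> exp (-s) * f s" using assms(1)[of s] by simp
    qed
  qed
qed

end

lemma KK_diff:
  assumes "continuous_on {0..} f" "\<And>s. 0 \<le> s \<Longrightarrow> \<bar>f s\<bar> \<le> M"
    and "continuous_on {0..} g" "\<And>s. 0 \<le> s \<Longrightarrow> \<bar>g s\<bar> \<le> M'"
  shows "KK (\<lambda>s. f s - g s) = KK f - KK g"
proof -
  have c: "continuous_on {0..} (\<lambda>s. f s - g s)" using assms by (auto intro!: continuous_intros)
  have b: "\<bar>f s - g s\<bar> \<le> M + M'" if "0 \<le> s" for s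
    using assms(2)[OF that] assms(4)[OF that] abs_triangle_ineq4[of "f s" "g s"] by linarith
  have eq: "I1 (\<lambda>s. f s - g s) (real k) = I1 f (real k) - I1 g (real k)" for k :: nat
    using assms by (intro I1_diff) auto
  have l1: "(\<lambda>k::nat. I1 f (real k) - I1 g (real k)) \<longlonglongrightarrow> KK (\<lambda>s. f s - g s)"
    using I1_lim[OF c b] unfolding eq .
  have l2: "(\<lambda>k. I1 f (real k) - I1 g (real k)) \<longlonglongrightarrow> KK f - KK g"
    by (intro tendsto_diff I1_lim[OF assms(1,2)] I1_lim[OF assms(3,4)])
  show ?thesis by (rule LIMSEQ_unique[OF l1 l2])
qed




lemma exp3_ge: "4 * exp (3 * a) \<le> exp (3 * b)" if "a + 1 \<le> b" for a b :: real
proof -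
  have "exp (3 * b) = exp (3 * a) * exp (3 * (b - a))" by (simp add: mult_exp_exp algebra_simps)
  moreover have "4 \<le> exp (3 * (b - a))"
  proof -
    have "1 + 3 \<le> exp (3::real)" using exp_ge_add_one_self[of 3] by simp
    also have "\<dots> \<le> exp (3 * (b - a))" using that by simp
    finally show ?thesis by simp
  qed
  ultimately show ?thesis by (simp add: mult.commute)
qed

lemma qual_pos:
  fixes V W :: "real \<Rightarrow> real"
  assumes m: "m < -1"
    and dV: "\<And>t. 0 \<le> t \<Longrightarrow> (V has_real_derivative W t) (at t within {0..})"
    and dW: "\<And>t. 0 \<le> t \<Longrightarrow> (W has_real_derivative Rt m (V t) - 3 * W t) (at t within {0..})"
    and neg: "\<And>t. 0 \<le> t \<Longrightarrow> V t < -1"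
    and bnd: "\<And>t. 0 \<le> t \<Longrightarrow> \<bar>V t + 1\<bar> \<le> B"
    and t0: "0 < t0"
  shows "W t0 > 0"
proof (rule ccontr)
  assume "\<not> W t0 > 0"
  hence W0: "W t0 \<le> 0" by simp
  have dP: "((\<lambda>t. exp (3 * t) * W t) has_real_derivative exp (3 * t) * Rt m (V t)) (at t within {0..})"
    if "0 \<le> t" for t
    apply (rule derivative_eq_intros dW[OF that] refl)+
    by (simp add: algebra_simps)
  have Wneg: "W t \<le> 0" if "t0 \<le> t" for t
  proof -
    have "exp (3 * t) * W t \<le> exp (3 * t0) * W t0"
    proof (rule decr0[of t0 t, OF _ that])
      show "0 \<le> t0" using t0 by simp
      fix s assume "t0 \<le> s" "s \<le> t"
      then show "((\<lambda>t. exp (3 * t) * W t) has_real_derivative exp (3 * s) * Rt m (V s)) (at s within {0..})"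
        using t0 by (intro dP) auto
    next
      fix s assume "t0 < s" "s < t"
      then have "Rt m (V s) < 0" using Rt_neg[OF m neg[of s]] t0 by simp
      then show "exp (3 * s) * Rt m (V s) \<le> 0" by (simp add: mult_nonneg_nonpos)
    qed
    also have "\<dots> \<le> 0" using W0 by (simp add: mult_nonneg_nonpos)
    finally show ?thesis by (simp add: zero_le_mult_iff mult_le_0_iff)
  qed
  have Vdec: "V t \<le> V t0" if "t0 \<le> t" for t
    by (rule decr0[OF _ that, of _ W]) (use t0 dV Wneg in auto)
  define \<delta> where "\<delta> = - Rt m (V t0)"
  have \<delta>: "\<delta> > 0" using Rt_neg[OF m neg[of t0]] t0 by (simp add: \<delta>_def)
  have Rle: "Rt m (V s) \<le> - \<delta>" if "t0 \<le> s" for s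
    using Rt_mono[OF m Vdec[OF that]] by (simp add: \<delta>_def)
  have P2: "exp (3 * t) * W t + \<delta> * exp (3 * t) / 3 \<le> \<delta> * exp (3 * t0) / 3" if "t0 \<le> t" for t
  proof -
    have "(\<lambda>t. exp (3 * t) * W t + \<delta> * exp (3 * t) / 3) t \<le> (\<lambda>t. exp (3 * t) * W t + \<delta> * exp (3 * t) / 3) t0"
    proof (rule decr0[of t0 t, OF _ that, of _ "\<lambda>s. exp (3 * s) * Rt m (V s) + \<delta> * exp (3 * s)"])
      show "0 \<le> t0" using t0 by simp
      fix s assume "t0 \<le> s" "s \<le> t"
      then have "0 \<le> s" using t0 by simp
      show "((\<lambda>t. exp (3 * t) * W t + \<delta> * exp (3 * t) / 3) has_real_derivative exp (3 * s) * Rt m (V s) + \<delta> * exp (3 * s)) (at s within {0..})"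
      proof -
        have "((\<lambda>t. \<delta> * exp (3 * t) / 3) has_real_derivative \<delta> * exp (3 * s)) (at s within {0..})"
          by (rule derivative_eq_intros refl)+ (simp_all add: field_simps)
        from DERIV_add[OF dP[OF \<open>0 \<le> s\<close>] this] show ?thesis by simp
      qed
    next
      fix s assume "t0 < s" "s < t"
      then have "exp (3 * s) * Rt m (V s) \<le> exp (3 * s) * (- \<delta>)" using Rle[of s] by (intro mult_left_mono) auto
      then show "exp (3 * s) * Rt m (V s) + \<delta> * exp (3 * s) \<le> 0" by (simp add: algebra_simps)
    qed
    also have "\<dots> \<le> \<delta> * exp (3 * t0) / 3" using W0 by (simp add: mult_nonpos_nonneg)
    finally show ?thesis by simp
  qed
  define t1 where "t1 = t0 + 1"
  have Wle: "W t \<le> - \<delta> / 6" if "t1 \<le> t" for t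
  proof -
    have e: "4 * exp (3 * t0) \<le> exp (3 * t)" using that by (intro exp3_ge) (simp add: t1_def)
    have "exp (3 * t) * W t \<le> \<delta> * exp (3 * t0) / 3 - \<delta> * exp (3 * t) / 3"
      using P2[of t] that t1_def by simp
    also have "\<dots> \<le> exp (3 * t) * (- \<delta> / 6)"
    proof -
      have h: "2 * exp (3 * t0) \<le> exp (3 * t)" using e exp_gt_zero[of "3 * t0"] by linarith
      have "\<delta> * (2 * exp (3 * t0)) \<le> \<delta> * exp (3 * t)" using h \<delta> by (intro mult_left_mono) auto
      moreover have "exp (3 * t) * (- \<delta> / 6) = - (\<delta> * exp (3 * t)) / 6" by simp
      ultimately show ?thesis by linarith
    qed
    finally have "exp (3 * t) * W t \<le> exp (3 * t) * (- \<delta> / 6)" .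
    then show ?thesis by (subst (asm) mult_le_cancel_left_pos) auto
  qed
  have Vlin: "V t + \<delta> / 6 * t \<le> V t1 + \<delta> / 6 * t1" if "t1 \<le> t" for t
  proof (rule decr0[of t1 t, OF _ that, of "\<lambda>t. V t + \<delta> / 6 * t" "\<lambda>s. W s + \<delta> / 6"])
    show "0 \<le> t1" using t0 by (simp add: t1_def)
    fix s assume "t1 \<le> s" "s \<le> t"
    then have "0 \<le> s" using t0 by (simp add: t1_def)
    show "((\<lambda>t. V t + \<delta> / 6 * t) has_real_derivative W s + \<delta> / 6) (at s within {0..})"
    proof -
      have "((\<lambda>t. \<delta> / 6 * t) has_real_derivative \<delta> / 6 * 1) (at s within {0..})"
        by (intro DERIV_cmult DERIV_ident)
      from DERIV_add[OF dV[OF \<open>0 \<le> s\<close>] this] show ?thesis by simp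
    qed
  next
    fix s assume "t1 < s" "s < t"
    then show "W s + \<delta> / 6 \<le> 0" using Wle[of s] by simp
  qed
  define t2 where "t2 = t1 + 6 * (B + 1) / \<delta>"
  have B0: "0 \<le> B" using bnd[of 0] by simp
  have "t1 \<le> t2" using B0 \<delta> by (simp add: t2_def)
  have "V t2 \<le> V t1 - \<delta> * (t2 - t1) / 6" using Vlin[OF \<open>t1 \<le> t2\<close>] by (simp add: field_simps)
  also have "\<delta> * (t2 - t1) / 6 = B + 1" using \<delta> by (simp add: t2_def)
  finally have "V t2 \<le> V t1 - (B + 1)" .
  moreover have "V t1 < -1" using neg[of t1] t0 by (simp add: t1_def)
  moreover have "\<bar>V t2 + 1\<bar> \<le> B" using bnd[of t2] \<open>t1 \<le> t2\<close> t0 by (simp add: t1_def)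
  ultimately show False by linarith
qed




lemma deriv_unique0:
  assumes "(f has_real_derivative a) (at 0 within {0..})" "(f has_real_derivative b) (at 0 within {0..})"
  shows "a = (b::real)"
proof -
  have "at (0::real) within {0..} \<noteq> bot" by (simp add: at_within_Ici_at_right)
  then show ?thesis using assms vector_derivative_unique_within
    by (metis has_real_derivative_iff_has_vector_derivative)
qed

lemma sol_range:
  assumes m: "m < -1" and sol: "is_solution m n V V'" and P: "\<forall>t>0. V' t > 0 \<and> V t \<le> -1"
    and t: "0 \<le> t"
  shows "m \<le> V t" "V t \<le> -1"
proof -
  have dV: "\<And>t. 0 \<le> t \<Longrightarrow> (V has_real_derivative V' t) (at t within {0..})"
    using sol by (auto simp: is_solution_def)
  have "V 0 \<le> V t" by (rule incr0[OF order_refl t, of _ V']) (use dV P in auto)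
  then show "m \<le> V t" using sol by (simp add: is_solution_def)
  show "V t \<le> -1" using P m sol t by (cases "t = 0") (auto simp: is_solution_def)
qed

lemma kap_ineq:
  assumes m: "m < -1" "m \<le> a" "m \<le> b"
  shows "kap m * (b - a)^2 \<le> (b - a) * (Rfun b - Rfun a)"
proof (cases "a \<le> b")
  case True
  have "kap m * (b - a) \<le> Rfun b - Rfun a" using slope[OF m(1,2) True] by simp
  then have "(b - a) * (kap m * (b - a)) \<le> (b - a) * (Rfun b - Rfun a)"
    using True by (intro mult_left_mono) auto
  then show ?thesis by (simp add: power2_eq_square algebra_simps)
next
  case False
  have "kap m * (a - b) \<le> Rfun a - Rfun b" using slope[OF m(1,3)] False by simp
  then have "(a - b) * (kap m * (a - b)) \<le> (a - b) * (Rfun a - Rfun b)"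
    using False by (intro mult_left_mono) auto
  then show ?thesis by (simp add: power2_eq_square algebra_simps)
qed

lemma uniq:
  assumes m: "m < -1" and n1: "n1 \<in> beta0 m" and n2: "n2 \<in> beta0 m"
  shows "n1 = n2"
proof -
  obtain V1 V1' where s1: "is_solution m n1 V1 V1'" and P1: "\<forall>t>0. V1' t > 0 \<and> V1 t \<le> -1"
    using n1 by (auto simp: beta0_def)
  obtain V2 V2' where s2: "is_solution m n2 V2 V2'" and P2: "\<forall>t>0. V2' t > 0 \<and> V2 t \<le> -1"
    using n2 by (auto simp: beta0_def)
  have dV1: "\<And>t. 0 \<le> t \<Longrightarrow> (V1 has_real_derivative V1' t) (at t within {0..})"
   and dW1: "\<And>t. 0 \<le> t \<Longrightarrow> (V1' has_real_derivative Rfun (V1 t) - 3 * V1' t) (at t within {0..})"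
    using s1 by (auto simp: is_solution_def)
  have dV2: "\<And>t. 0 \<le> t \<Longrightarrow> (V2 has_real_derivative V2' t) (at t within {0..})"
   and dW2: "\<And>t. 0 \<le> t \<Longrightarrow> (V2' has_real_derivative Rfun (V2 t) - 3 * V2' t) (at t within {0..})"
    using s2 by (auto simp: is_solution_def)
  have r1: "m \<le> V1 t" "V1 t \<le> -1" if "0 \<le> t" for t using sol_range[OF m s1 P1 that] by auto
  have r2: "m \<le> V2 t" "V2 t \<le> -1" if "0 \<le> t" for t using sol_range[OF m s2 P2 that] by auto
  define W where "W t = V2 t - V1 t" for t
  define W' where "W' t = V2' t - V1' t" for t
  define D where "D t = exp (3 * t) * ((W' t)^2 + W t * (Rfun (V2 t) - Rfun (V1 t)))" for t
  have dW: "(W has_real_derivative W' t) (at t within {0..})" if "0 \<le> t" for t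
    unfolding W_def[abs_def] W'_def using DERIV_diff[OF dV2[OF that] dV1[OF that]] by simp
  have dW': "(W' has_real_derivative (Rfun (V2 t) - 3 * V2' t) - (Rfun (V1 t) - 3 * V1' t)) (at t within {0..})"
    if "0 \<le> t" for t
    unfolding W'_def[abs_def] using DERIV_diff[OF dW2[OF that] dW1[OF that]] by simp
  have dPsi: "((\<lambda>t. exp (3 * t) * W t * W' t) has_real_derivative D t) (at t within {0..})"
    if "0 \<le> t" for t
    apply (rule derivative_eq_intros dW[OF that] dW'[OF that] refl)+
    by (simp add: D_def W'_def algebra_simps power2_eq_square)
  have Dge: "exp (3 * t) * (kap m * (W t)^2) \<le> D t" if "0 \<le> t" for t
  proof -
    have "kap m * (W t)^2 \<le> W t * (Rfun (V2 t) - Rfun (V1 t))"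
      unfolding W_def by (rule kap_ineq[OF m r1(1)[OF that] r2(1)[OF that]])
    also have "\<dots> \<le> (W' t)^2 + W t * (Rfun (V2 t) - Rfun (V1 t))" by simp
    finally show ?thesis unfolding D_def by (intro mult_left_mono) auto
  qed
  have kap0: "0 < kap m" using kap[OF m] by simp
  have Dnn: "0 \<le> D t" if "0 \<le> t" for t
    using Dge[OF that] kap0 by (smt (verit) exp_gt_zero mult_nonneg_nonneg zero_le_power2)
  have Psi_nn: "0 \<le> exp (3 * t) * W t * W' t" if "0 \<le> t" for t
  proof -
    have "(\<lambda>t. exp (3 * t) * W t * W' t) 0 \<le> (\<lambda>t. exp (3 * t) * W t * W' t) t"
      by (rule incr0[OF order_refl that, of _ D]) (use dPsi Dnn in auto)
    moreover have "W 0 = 0" using s1 s2 by (simp add: W_def is_solution_def)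
    ultimately show ?thesis by simp
  qed
  have WW: "0 \<le> W t * W' t" if "0 \<le> t" for t
    using Psi_nn[OF that] by (simp add: zero_le_mult_iff mult.assoc)
  have dW2: "((\<lambda>t. (W t)^2) has_real_derivative 2 * W t * W' t) (at t within {0..})" if "0 \<le> t" for t
    apply (rule derivative_eq_intros dW[OF that] refl)+
    by (simp add: algebra_simps)
  have W2mono: "(W a)^2 \<le> (W b)^2" if "0 \<le> a" "a \<le> b" for a b
    by (rule incr0[OF that, of _ "\<lambda>t. 2 * W t * W' t"]) (use dW2 WW that in \<open>auto simp: mult.assoc\<close>)
  have Wbnd: "(W t)^2 \<le> (m + 1)^2" if "0 \<le> t" for t
  proof -
    have "\<bar>W t\<bar> \<le> \<bar>m + 1\<bar>" using r1[OF that] r2[OF that] m by (auto simp: W_def abs_le_iff)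
    then show ?thesis by (simp add: abs_le_square_iff)
  qed
  show ?thesis
  proof (cases "\<forall>t\<ge>0. W t = 0")
    case True
    have "(V2 has_real_derivative n1) (at 0 within {0..})"
    proof (rule has_field_derivative_transform_within[of V1 n1 0 "{0..}" 1])
      show "(V1 has_real_derivative n1) (at 0 within {0..})" using dV1[of 0] s1 by (simp add: is_solution_def)
      fix x :: real assume "x \<in> {0..}" "dist x 0 < 1"
      then show "V1 x = V2 x" using True by (auto simp: W_def)
    qed auto
    moreover have "(V2 has_real_derivative n2) (at 0 within {0..})" using dV2[of 0] s2 by (simp add: is_solution_def)
    ultimately show ?thesis by (rule deriv_unique0)
  next
    case False
    then obtain t1 where t1: "0 \<le> t1" "W t1 \<noteq> 0" by auto
    define w where "w = (W t1)^2"
    have w: "0 < w" using t1 by (simp add: w_def)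
    have Wge: "w \<le> (W t)^2" if "t1 \<le> t" for t using W2mono[OF t1(1) that] by (simp add: w_def)
    have Psi2: "kap m * w * exp (3 * t) / 3 - kap m * w * exp (3 * t1) / 3 \<le> exp (3 * t) * W t * W' t"
      if "t1 \<le> t" for t
    proof -
      have "(\<lambda>t. exp (3 * t) * W t * W' t - kap m * w * exp (3 * t) / 3) t1
            \<le> (\<lambda>t. exp (3 * t) * W t * W' t - kap m * w * exp (3 * t) / 3) t"
      proof (rule incr0[OF t1(1) that, of _ "\<lambda>t. D t - kap m * w * exp (3 * t)"])
        fix s assume "t1 \<le> s" "s \<le> t"
        then have s0: "0 \<le> s" using t1 by simp
        have "((\<lambda>t. kap m * w * exp (3 * t) / 3) has_real_derivative kap m * w * exp (3 * s)) (at s within {0..})"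
          by (rule derivative_eq_intros refl)+ (simp_all add: field_simps)
        from DERIV_diff[OF dPsi[OF s0] this]
        show "((\<lambda>t. exp (3 * t) * W t * W' t - kap m * w * exp (3 * t) / 3) has_real_derivative D s - kap m * w * exp (3 * s)) (at s within {0..})"
          by simp
      next
        fix s assume s: "t1 < s" "s < t"
        then have "kap m * w \<le> kap m * (W s)^2" using Wge[of s] kap0 by (intro mult_left_mono) auto
        then have "exp (3 * s) * (kap m * w) \<le> exp (3 * s) * (kap m * (W s)^2)" by (rule mult_left_mono) auto
        also have "\<dots> \<le> D s" using Dge[of s] s t1 by simp
        finally show "0 \<le> D s - kap m * w * exp (3 * s)" by (simp add: algebra_simps)
      qed
      then show ?thesis using Psi_nn[OF t1(1)] by simp
    qed
    define c where "c = kap m * w / 4"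
    have c: "0 < c" using kap0 w by (simp add: c_def)
    define t2 where "t2 = t1 + 1"
    have WWc: "c \<le> W t * W' t" if "t2 \<le> t" for t
    proof -
      have e: "4 * exp (3 * t1) \<le> exp (3 * t)" using that by (intro exp3_ge) (simp add: t2_def)
      have "exp (3 * t) * c \<le> kap m * w * exp (3 * t) / 3 - kap m * w * exp (3 * t1) / 3"
      proof -
        have "kap m * w * (4 * exp (3 * t1)) \<le> kap m * w * exp (3 * t)"
          using e kap0 w by (intro mult_left_mono) auto
        then show ?thesis by (simp add: c_def field_simps)
      qed
      also have "\<dots> \<le> exp (3 * t) * (W t * W' t)" using Psi2[of t] that by (simp add: t2_def mult.assoc)
      finally have "exp (3 * t) * c \<le> exp (3 * t) * (W t * W' t)" .
      then show ?thesis by (subst (asm) mult_le_cancel_left_pos) auto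
    qed
    have W2lin: "(W t2)^2 + 2 * c * (t - t2) \<le> (W t)^2" if "t2 \<le> t" for t
    proof -
      have "(\<lambda>t. (W t)^2 - 2 * c * t) t2 \<le> (\<lambda>t. (W t)^2 - 2 * c * t) t"
      proof (rule incr0[OF _ that, of _ "\<lambda>t. 2 * W t * W' t - 2 * c * 1"])
        show "0 \<le> t2" using t1 by (simp add: t2_def)
        fix s assume "t2 \<le> s" "s \<le> t"
        then have s0: "0 \<le> s" using t1 by (simp add: t2_def)
        have "((\<lambda>t. 2 * c * t) has_real_derivative 2 * c * 1) (at s within {0..})"
          by (intro DERIV_cmult DERIV_ident)
        from DERIV_diff[OF dW2[OF s0] this]
        show "((\<lambda>t. (W t)^2 - 2 * c * t) has_real_derivative 2 * W s * W' s - 2 * c * 1) (at s within {0..})"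
          by simp
      next
        fix s assume "t2 < s" "s < t"
        then show "0 \<le> 2 * W s * W' s - 2 * c * 1" using WWc[of s] by (simp add: mult.assoc)
      qed
      then show ?thesis by (simp add: algebra_simps)
    qed
    define t3 where "t3 = t2 + ((m + 1)^2 + 1) / (2 * c)"
    have "t2 \<le> t3" using c by (simp add: t3_def)
    have "2 * c * (t3 - t2) = (m + 1)^2 + 1" using c by (simp add: t3_def)
    then have "(m + 1)^2 + 1 \<le> (W t3)^2" using W2lin[OF \<open>t2 \<le> t3\<close>] using zero_le_power2[of "W t2"] by linarith
    moreover have "(W t3)^2 \<le> (m + 1)^2" using Wbnd[of t3] \<open>t2 \<le> t3\<close> t1 by (simp add: t2_def)
    ultimately show ?thesis by simp
  qed
qed




definition nf :: "real \<Rightarrow> (real \<Rightarrow> real) \<Rightarrow> real \<Rightarrow> real" where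
  "nf m v s = NN m (v s)"
definition EE :: "(real \<Rightarrow> real) \<Rightarrow> real \<Rightarrow> real" where
  "EE f t = (exp (-4 * t) - exp t) * (KK f - I1 f t) + exp (-4 * t) * (I1 f t - I4 f t)"
definition FF :: "real \<Rightarrow> (real \<Rightarrow> real) \<Rightarrow> real \<Rightarrow> real" where
  "FF m v t = -1 + (m + 1) * exp (-4 * t) + EE (nf m v) t / 5"
definition FFp :: "real \<Rightarrow> (real \<Rightarrow> real) \<Rightarrow> real \<Rightarrow> real" where
  "FFp m v t = -4 * (m + 1) * exp (-4 * t) + ((-4 * exp (-4 * t) - exp t) * KK (nf m v)
      + exp t * I1 (nf m v) t + 4 * exp (-4 * t) * I4 (nf m v) t) / 5"

lemma nf_cont: assumes "m < -1" "continuous_on UNIV v" shows "continuous_on {0..} (nf m v)"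
proof -
  have "continuous_on UNIV (NN m \<circ> v)"
    by (rule continuous_on_compose[OF assms(2)]) (rule continuous_on_subset[OF NN_cont[OF assms(1)]], simp)
  moreover have "nf m v = NN m \<circ> v" by (simp add: fun_eq_iff nf_def)
  ultimately show ?thesis by (auto intro: continuous_on_subset)
qed

lemma nf_bnd: assumes "m < -1" shows "\<bar>nf m v s\<bar> \<le> NN m m" "0 \<le> nf m v s"
  using NN_bounds[OF assms, of "v s"] by (auto simp: nf_def)

lemma expc1: "exp t * (exp (- t) * x) = (x::real)"
  by (simp add: mult.assoc[symmetric] exp_minus_inverse)
lemma expc4: "exp (-4 * t) * (exp (4 * t) * x) = (x::real)"
  by (simp add: mult.assoc[symmetric] mult_exp_exp)

lemma expc4': "exp (- (4 * t)) * (exp (4 * t) * x) = (x::real)"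
  using expc4[of t x] by simp

lemma FF_alt: "FF m v t = -1 + (m + 1) * exp (-4 * t) + ((exp (-4 * t) - exp t) * KK (nf m v)
      + exp t * I1 (nf m v) t - exp (-4 * t) * I4 (nf m v) t) / 5"
  by (simp add: FF_def EE_def algebra_simps)

lemma G1_deriv:
  assumes cn: "continuous_on {0..} f" and t: "0 \<le> t"
  shows "((\<lambda>t. exp t * I1 f t) has_real_derivative exp t * I1 f t + f t) (at t within {0..})"
proof -
  have "((\<lambda>t. exp t * I1 f t) has_real_derivative exp t * (exp (-t) * f t) + exp t * I1 f t) (at t within {0..})"
    by (rule DERIV_mult'[OF DERIV_exp[THEN has_field_derivative_at_within] dI1[OF cn t]])
  then show ?thesis by (simp add: expc1 add.commute)
qed

lemma G4_deriv:
  assumes cn: "continuous_on {0..} f" and t: "0 \<le> t"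
  shows "((\<lambda>t. exp (-4 * t) * I4 f t) has_real_derivative -4 * exp (-4 * t) * I4 f t + f t) (at t within {0..})"
proof -
  have e: "((\<lambda>t. exp (-4 * t)) has_real_derivative -4 * exp (-4 * t)) (at t within {0..})"
    by (rule derivative_eq_intros refl)+ simp
  have "((\<lambda>t. exp (-4 * t) * I4 f t) has_real_derivative exp (-4 * t) * (exp (4 * t) * f t) + -4 * exp (-4 * t) * I4 f t) (at t within {0..})"
    by (rule DERIV_mult'[OF e dI4[OF cn t]])
  then show ?thesis unfolding expc4 by (simp add: algebra_simps)
qed

lemma FF_deriv:
  assumes m: "m < -1" and c: "continuous_on UNIV v" and t: "0 \<le> t"
  shows "(FF m v has_real_derivative FFp m v t) (at t within {0..})"
proof -
  have cn: "continuous_on {0..} (nf m v)" by (rule nf_cont[OF m c])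
  define G1 where "G1 t = exp t * I1 (nf m v) t" for t
  define G4 where "G4 t = exp (-4 * t) * I4 (nf m v) t" for t
  have g1: "(G1 has_real_derivative exp t * I1 (nf m v) t + nf m v t) (at t within {0..})"
    unfolding G1_def[abs_def] by (rule G1_deriv[OF cn t])
  have g4: "(G4 has_real_derivative -4 * exp (-4 * t) * I4 (nf m v) t + nf m v t) (at t within {0..})"
    unfolding G4_def[abs_def] by (rule G4_deriv[OF cn t])
  have "((\<lambda>t. -1 + (m + 1) * exp (-4 * t) + ((exp (-4 * t) - exp t) * KK (nf m v)
      + G1 t - G4 t) / 5) has_real_derivative FFp m v t) (at t within {0..})"
    apply (rule derivative_eq_intros g1 g4 refl)+
     apply simp
     apply (rule refl)
    by (simp add: FFp_def field_simps)
  then show ?thesis unfolding FF_alt[abs_def] G1_def G4_def by simp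
qed

lemma FFp_deriv:
  assumes m: "m < -1" and c: "continuous_on UNIV v" and t: "0 \<le> t"
  shows "(FFp m v has_real_derivative 4 * (FF m v t + 1) + nf m v t - 3 * FFp m v t) (at t within {0..})"
proof -
  have cn: "continuous_on {0..} (nf m v)" by (rule nf_cont[OF m c])
  define G1 where "G1 t = exp t * I1 (nf m v) t" for t
  define G4 where "G4 t = exp (-4 * t) * I4 (nf m v) t" for t
  have g1: "(G1 has_real_derivative exp t * I1 (nf m v) t + nf m v t) (at t within {0..})"
    unfolding G1_def[abs_def] by (rule G1_deriv[OF cn t])
  have g4: "(G4 has_real_derivative -4 * exp (-4 * t) * I4 (nf m v) t + nf m v t) (at t within {0..})"
    unfolding G4_def[abs_def] by (rule G4_deriv[OF cn t])
  have "((\<lambda>t. -4 * (m + 1) * exp (-4 * t) + ((-4 * exp (-4 * t) - exp t) * KK (nf m v)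
      + G1 t + 4 * G4 t) / 5) has_real_derivative 4 * (FF m v t + 1) + nf m v t - 3 * FFp m v t) (at t within {0..})"
    apply (rule derivative_eq_intros g1 g4 refl)+
     apply simp
     apply (rule refl)
    by (simp add: FFp_def FF_alt G1_def G4_def field_simps)
  moreover have "FFp m v = (\<lambda>t. -4 * (m + 1) * exp (-4 * t) + ((-4 * exp (-4 * t) - exp t) * KK (nf m v)
      + G1 t + 4 * G4 t) / 5)" by (simp add: fun_eq_iff FFp_def G1_def G4_def algebra_simps)
  ultimately show ?thesis by simp
qed




definition TT :: "real \<Rightarrow> (real \<Rightarrow>\<^sub>C real) \<Rightarrow> (real \<Rightarrow>\<^sub>C real)" where
  "TT m v = Bcontfun (\<lambda>t. FF m (apply_bcontfun v) (max t 0))"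

lemma FF_cont: assumes "m < -1" "continuous_on UNIV v" shows "continuous_on {0..} (FF m v)"
  by (rule DERIV_continuous_on[OF FF_deriv[OF assms]]) auto

lemma EE_bound: assumes "m < -1" "continuous_on UNIV v" "0 \<le> t"
  shows "\<bar>EE (nf m v) t\<bar> \<le> 5/4 * NN m m"
  unfolding EE_def by (rule main_bound[OF nf_cont[OF assms(1,2)] nf_bnd(1)[OF assms(1)] assms(3)])

lemma FF_bound: assumes "m < -1" "continuous_on UNIV v" "0 \<le> t"
  shows "\<bar>FF m v t + 1\<bar> \<le> \<bar>m + 1\<bar> + NN m m / 4"
proof -
  have "\<bar>(m + 1) * exp (-4 * t)\<bar> \<le> \<bar>m + 1\<bar>"
    using assms(3) by (simp add: abs_mult mult_left_le)
  moreover have "\<bar>EE (nf m v) t / 5\<bar> \<le> NN m m / 4" using EE_bound[OF assms] by simp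
  moreover have "FF m v t + 1 = (m + 1) * exp (-4 * t) + EE (nf m v) t / 5" by (simp add: FF_def)
  ultimately show ?thesis by (smt (verit))
qed

lemma TT_mem: assumes m: "m < -1"
  shows "(\<lambda>t. FF m (apply_bcontfun v) (max t 0)) \<in> bcontfun"
proof (rule bcontfun_normI)
  show "continuous_on UNIV (\<lambda>t. FF m (apply_bcontfun v) (max t 0))"
    by (rule continuous_on_compose2[OF FF_cont[OF m]]) (auto intro!: continuous_intros)
  fix t
  have "\<bar>FF m (apply_bcontfun v) (max t 0) + 1\<bar> \<le> \<bar>m + 1\<bar> + NN m m / 4"
    by (rule FF_bound[OF m]) auto
  then show "norm (FF m (apply_bcontfun v) (max t 0)) \<le> 1 + \<bar>m + 1\<bar> + NN m m / 4"
    by (simp add: abs_le_iff)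
qed

lemma TT_apply: assumes "m < -1"
  shows "apply_bcontfun (TT m v) t = FF m (apply_bcontfun v) (max t 0)"
  by (simp add: TT_def Bcontfun_inverse[OF TT_mem[OF assms]])

lemma EE_diff:
  assumes "continuous_on {0..} f" "\<And>s. 0 \<le> s \<Longrightarrow> \<bar>f s\<bar> \<le> M"
    and "continuous_on {0..} g" "\<And>s. 0 \<le> s \<Longrightarrow> \<bar>g s\<bar> \<le> M'" and "0 \<le> t"
  shows "EE f t - EE g t = EE (\<lambda>s. f s - g s) t"
proof -
  have k: "KK (\<lambda>s. f s - g s) = KK f - KK g" by (rule KK_diff[OF assms(1-4)])
  show ?thesis
    unfolding EE_def k I1_diff[OF assms(1,3,5)] I4_diff[OF assms(1,3,5)]
    by (simp add: algebra_simps)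
qed

lemma TT_contr: assumes m: "m < -1"
  shows "dist (TT m v1) (TT m v2) \<le> LL m / 4 * dist v1 v2"
proof (rule dist_bound)
  fix x :: real
  define t where "t = max x 0"
  have t: "0 \<le> t" unfolding t_def by (rule max.cobounded2)
  let ?n1 = "nf m (apply_bcontfun v1)" and ?n2 = "nf m (apply_bcontfun v2)"
  have c1: "continuous_on {0..} ?n1" and c2: "continuous_on {0..} ?n2" by (auto intro!: nf_cont m)
  have b1: "\<And>s. 0 \<le> s \<Longrightarrow> \<bar>?n1 s\<bar> \<le> NN m m" and b2: "\<And>s. 0 \<le> s \<Longrightarrow> \<bar>?n2 s\<bar> \<le> NN m m"
    by (auto intro!: nf_bnd m)
  have bd: "\<bar>?n1 s - ?n2 s\<bar> \<le> LL m * dist v1 v2" if "0 \<le> s" for s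
  proof -
    have "\<bar>?n1 s - ?n2 s\<bar> \<le> LL m * \<bar>apply_bcontfun v1 s - apply_bcontfun v2 s\<bar>"
      unfolding nf_def by (rule NN_lip[OF m])
    also have "\<dots> \<le> LL m * dist v1 v2"
      using dist_bounded[of v1 s v2] LL[OF m] by (intro mult_left_mono) (auto simp: dist_real_def)
    finally show ?thesis .
  qed
  have cd: "continuous_on {0..} (\<lambda>s. ?n1 s - ?n2 s)" using c1 c2 by (intro continuous_intros)
  have e: "TT m v1 x - TT m v2 x = (EE ?n1 t - EE ?n2 t) / 5"
    by (simp add: TT_apply[OF m] t_def[symmetric] FF_def diff_divide_distrib)
  have "dist (TT m v1 x) (TT m v2 x) = \<bar>EE ?n1 t - EE ?n2 t\<bar> / 5"
    unfolding dist_real_def e by simp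
  also have "EE ?n1 t - EE ?n2 t = EE (\<lambda>s. ?n1 s - ?n2 s) t"
    by (rule EE_diff[OF c1 b1 c2 b2 t])
  also have "\<bar>EE (\<lambda>s. ?n1 s - ?n2 s) t\<bar> \<le> 5/4 * (LL m * dist v1 v2)"
    unfolding EE_def by (rule main_bound[OF cd bd t])
  then have "\<bar>EE (\<lambda>s. ?n1 s - ?n2 s) t\<bar> / 5 \<le> LL m / 4 * dist v1 v2" by simp
  finally show "dist (TT m v1 x) (TT m v2 x) \<le> LL m / 4 * dist v1 v2" .
qed




lemma I1_le_I4:
  assumes c: "continuous_on {0..} f" and nn: "\<And>s. 0 \<le> s \<Longrightarrow> 0 \<le> f s" and t: "0 \<le> t"
  shows "I1 f t \<le> I4 f t"
proof -
  have "(\<lambda>t. I4 f t - I1 f t) 0 \<le> (\<lambda>t. I4 f t - I1 f t) t"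
  proof (rule incr0[OF order_refl t, of _ "\<lambda>s. exp (4 * s) * f s - exp (-s) * f s"])
    fix s assume "0 \<le> s" "s \<le> t"
    then show "((\<lambda>t. I4 f t - I1 f t) has_real_derivative exp (4 * s) * f s - exp (-s) * f s) (at s within {0..})"
      by (intro DERIV_diff dI4 dI1 c)
  next
    fix s assume s: "0 < s" "s < t"
    have "exp (-s) \<le> exp (4 * s)" using s by simp
    then have "exp (-s) * f s \<le> exp (4 * s) * f s" using nn[of s] s by (intro mult_right_mono) auto
    then show "0 \<le> exp (4 * s) * f s - exp (-s) * f s" by simp
  qed
  then show ?thesis by simp
qed

lemma exist: assumes m: "m < -1" shows "\<exists>n. n \<in> beta0 m"
proof -
  have "\<exists>!v. TT m v = v"
    by (rule banach_fix_type[of "LL m / 4"]) (use LL[OF m] TT_contr[OF m] in auto)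
  then obtain v where fx: "TT m v = v" by auto
  define u where "u = apply_bcontfun v"
  have cu: "continuous_on UNIV u" by (simp add: u_def)
  have ufix: "u t = FF m u (max t 0)" for t
    using TT_apply[OF m, of v t] fx by (simp add: u_def)
  define V where "V = FF m u"
  define W where "W = FFp m u"
  define n where "n = nf m u"
  have cn: "continuous_on {0..} n" unfolding n_def by (rule nf_cont[OF m cu])
  have nn: "\<And>s. 0 \<le> s \<Longrightarrow> 0 \<le> n s" unfolding n_def by (rule nf_bnd(2)[OF m])
  have nb: "\<And>s. 0 \<le> s \<Longrightarrow> \<bar>n s\<bar> \<le> NN m m" unfolding n_def by (rule nf_bnd(1)[OF m])
  have nV: "n t = NN m (V t)" if "0 \<le> t" for t
    using ufix[of t] that by (simp add: n_def nf_def V_def max_absorb1)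
  have dV: "(V has_real_derivative W t) (at t within {0..})" if "0 \<le> t" for t
    unfolding V_def W_def by (rule FF_deriv[OF m cu that])
  have dW: "(W has_real_derivative Rt m (V t) - 3 * W t) (at t within {0..})" if "0 \<le> t" for t
  proof -
    have "(W has_real_derivative 4 * (V t + 1) + n t - 3 * W t) (at t within {0..})"
      unfolding V_def W_def n_def by (rule FFp_deriv[OF m cu that])
    then show ?thesis using nV[OF that] by (simp add: Rt_def)
  qed
  have neg: "V t < -1" if t: "0 \<le> t" for t
  proof -
    have A: "(exp (-4 * t) - exp t) * (KK n - I1 n t) \<le> 0"
    proof (rule mult_nonpos_nonneg)
      show "exp (-4 * t) - exp t \<le> 0" using t by simp
      show "0 \<le> KK n - I1 n t" using KK_ge[OF cn nb nn t] by simp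
    qed
    have B: "exp (-4 * t) * (I1 n t - I4 n t) \<le> 0"
      using I1_le_I4[OF cn nn t] by (simp add: mult_nonneg_nonpos)
    have C: "(m + 1) * exp (-4 * t) < 0" using m by (simp add: mult_neg_pos)
    have "V t = -1 + (m + 1) * exp (-4 * t) + ((exp (-4 * t) - exp t) * (KK n - I1 n t) + exp (-4 * t) * (I1 n t - I4 n t)) / 5"
      by (simp add: V_def FF_def EE_def n_def)
    moreover have key: "V0 < -1" if "V0 = -1 + c + (a + b) / 5" "a \<le> 0" "b \<le> 0" "c < 0" for V0 a b c :: real
      using that by (simp add: field_simps)
    ultimately show ?thesis using A B C by blast
  qed
  have bnd: "\<bar>V t + 1\<bar> \<le> \<bar>m + 1\<bar> + NN m m / 4" if "0 \<le> t" for t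
    unfolding V_def by (rule FF_bound[OF m cu that])
  have pos: "W t > 0" if "0 < t" for t
    by (rule qual_pos[OF m dV dW neg bnd that])
  have V0: "V 0 = m" by (simp add: V_def FF_def EE_def)
  have geq: "m \<le> V t" if "0 \<le> t" for t
  proof -
    have "V 0 \<le> V t" by (rule incr0[OF order_refl that, of _ W]) (use dV pos in \<open>auto intro: less_imp_le\<close>)
    then show ?thesis using V0 by simp
  qed
  have sol: "is_solution m (W 0) V W"
    unfolding is_solution_def
  proof (intro conjI allI impI)
    show "V 0 = m" by (rule V0)
    show "W 0 = W 0" ..
    fix t :: real assume t: "0 \<le> t"
    show "(V has_real_derivative W t) (at t within {0..})" by (rule dV[OF t])
    show "(W has_real_derivative Rfun (V t) - 3 * W t) (at t within {0..})"
      using dW[OF t] Rt_eq[OF geq[OF t]] by simp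
  qed
  have "\<forall>t>0. W t > 0 \<and> V t \<le> -1" using pos neg by (auto intro: less_imp_le)
  with sol show ?thesis unfolding beta0_def by blast
qed

theorem lemma4p5:
  fixes m :: real
  assumes "m < -1"
  shows "\<exists>n. beta0 m = {n}"
proof -
  obtain n where n: "n \<in> beta0 m" using exist[OF assms] by blast
  have "beta0 m = {n}" using n uniq[OF assms] by blast
  then show ?thesis by blast
qed



end
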